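(* Let $K\subset S^3$ be a knot and $\mathbb{I}$ a sequence of $m$ crossing changes turning $K$ into the unknot. Let $\mathfrak{f}^+_\mathbb{I}:\mathbb{H}(K)\to\mathbb{A}$ and $\mathfrak{f}^-_\mathbb{I}:\mathbb{A}\to\mathbb{H}(K)$ be the homogeneous $\mathbb{A}$-module maps induced on homology by composing the crossing-change chain maps along $\mathbb{I}$, so that $\mathfrak{f}^-_\mathbb{I}\circ\mathfrak{f}^+_\mathbb{I}$ and $\mathfrak{f}^+_\mathbb{I}\circ\mathfrak{f}^-_\mathbb{I}$ are multiplication by $\mathsf{w}^{m}$. Then the composition $\mathbb{A}\to\mathbb{A}(K)$ of $\mathfrak{f}^-_\mathbb{I}$ with the projection $\mathbb{H}(K)\to\mathbb{A}(K)$ is injective; the restriction of $\mathfrak{f}^+_\mathbb{I}$ to $\mathbb{T}(K)$ is zero, so $\mathfrak{f}^+_\mathbb{I}$ induces a map $\mathfrak{f}^+:\mathbb{A}(K)\to\mathbb{A}$, which is injective; and these induced maps are homogeneous with respect to the Alexander grading.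
   Context: Work over $\mathbb{F}=\mathbb{Z}/2$, $\mathbb{A}=\mathbb{F}[\mathsf{u},\mathsf{w}]$. $\mathrm{CF}(K)$ is the knot Floer chain complex of $K$ over $\mathbb{A}$ (equivalent to $CFK^\infty$), with Alexander grading $A(\mathsf{u}^a\mathsf{w}^bx)=A(x)-a+b$; $\mathrm{CF}(\text{unknot})\simeq\mathbb{A}$. $\mathbb{H}(K)$ is its homology, $\mathbb{T}(K)=\{x\in\mathbb{H}(K): ax=0\text{ for some }0\ne a\in\mathbb{A}\}$, and $\mathbb{A}(K)=\mathbb{H}(K)/\mathbb{T}(K)$. For each crossing change from a knot $J$ to $J'$ there are homogeneous chain maps $\mathrm{CF}(J)\to\mathrm{CF}(J')$ and $\mathrm{CF}(J')\to\mathrm{CF}(J)$ whose compositions in either order are chain homotopic to multiplication by $\mathsf{w}$; composing these along $\mathbb{I}$ yields the maps above. *)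

theory Defs
  imports "HOL-Library.Z2" "HOL-Computational_Algebra.Polynomial"
begin

text \<open>The ring A = F[u,w] over F = Z/2, modelled as bivariate polynomials:
  outer variable w, inner variable u.  The monomial u^a w^b is the element with
  coeff (coeff p b) a = 1.\<close>

type_synonym Aring = "bit poly poly"

definition uA :: Aring where "uA = [:[:0, 1:]:]"
definition wA :: Aring where "wA = monom 1 1"

definition A_deg :: "int \<Rightarrow> Aring set" where
  "A_deg k = {p. \<forall>a b. coeff (coeff p b) a \<noteq> 0 \<longrightarrow> int b - int a = k}"

definition graded_A_module :: "(Aring \<Rightarrow> 'h::ab_group_add \<Rightarrow> 'h) \<Rightarrow> (int \<Rightarrow> 'h set) \<Rightarrow> bool" where
  "graded_A_module sm Hd \<longleftrightarrow> module sm \<and>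
     (\<forall>k. 0 \<in> Hd k \<and> (\<forall>x\<in>Hd k. \<forall>y\<in>Hd k. x + y \<in> Hd k)) \<and>
     (\<forall>j k p x. p \<in> A_deg j \<longrightarrow> x \<in> Hd k \<longrightarrow> sm p x \<in> Hd (j + k) ) \<and>
     (\<forall>x. \<exists>S c. finite S \<and> (\<forall>k\<in>S. c k \<in> Hd k) \<and> x = (\<Sum>k\<in>S. c k)) \<and>
     (\<forall>S c. finite S \<longrightarrow> (\<forall>k\<in>S. c k \<in> Hd k) \<longrightarrow> (\<Sum>k\<in>S. c k) = 0 \<longrightarrow> (\<forall>k\<in>S. c k = 0))"

definition torsion :: "(Aring \<Rightarrow> 'h::ab_group_add \<Rightarrow> 'h) \<Rightarrow> 'h set" where
  "torsion sm = {x. \<exists>a. a \<noteq> 0 \<and> sm a x = 0}"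

text \<open>A(K) = H/T, represented by the quotient map into equivalence classes.\<close>
definition quot_T :: "(Aring \<Rightarrow> 'h::ab_group_add \<Rightarrow> 'h) \<Rightarrow> 'h \<Rightarrow> 'h set" where
  "quot_T sm x = {y. y - x \<in> torsion sm}"

definition quot_deg :: "(Aring \<Rightarrow> 'h::ab_group_add \<Rightarrow> 'h) \<Rightarrow> (int \<Rightarrow> 'h set) \<Rightarrow> int \<Rightarrow> 'h set set" where
  "quot_deg sm Hd k = quot_T sm ` Hd k"

end

theory Submission
  imports Defs
begin

lemma wA_pow_nz: "(wA ^ m :: Aring) \<noteq> 0"
  by (simp add: wA_def)

theorem lemma3p4:
  fixes sm :: "Aring \<Rightarrow> 'h::ab_group_add \<Rightarrow> 'h"
    and Hd :: "int \<Rightarrow> 'h set"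
    and fplus :: "'h \<Rightarrow> Aring" and fminus :: "Aring \<Rightarrow> 'h"
    and m :: nat and cp cm :: int
  assumes graded: "graded_A_module sm Hd"
    and hom_plus: "module_hom sm (*) fplus"
    and hom_minus: "module_hom (*) sm fminus"
    and homog_plus: "\<And>k x. x \<in> Hd k \<Longrightarrow> fplus x \<in> A_deg (k + cp)"
    and homog_minus: "\<And>k a. a \<in> A_deg k \<Longrightarrow> fminus a \<in> Hd (k + cm)"
    and comp1: "\<And>x. fminus (fplus x) = sm (wA ^ m) x"
    and comp2: "\<And>a. fplus (fminus a) = wA ^ m * a"
  shows "inj (\<lambda>a. quot_T sm (fminus a))
       \<and> (\<forall>x \<in> torsion sm. fplus x = 0)
       \<and> (\<exists>fbar :: 'h set \<Rightarrow> Aring.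
            (\<forall>x. fbar (quot_T sm x) = fplus x)
          \<and> inj_on fbar (range (quot_T sm))
          \<and> (\<forall>k. \<forall>X \<in> quot_deg sm Hd k. fbar X \<in> A_deg (k + cp)))
       \<and> (\<forall>k a. a \<in> A_deg k \<longrightarrow> quot_T sm (fminus a) \<in> quot_deg sm Hd (k + cm))"
proof -
  interpret P: module_hom sm "(*)" fplus by (rule hom_plus)
  interpret M: module_hom "(*)" sm fminus by (rule hom_minus)
  have T0: "0 \<in> torsion sm" unfolding torsion_def
    by (rule CollectI, rule exI[of _ 1]) simp
  have Tneg: "- x \<in> torsion sm" if "x \<in> torsion sm" for x
    using that unfolding torsion_def by auto
  have Tadd: "x + y \<in> torsion sm" if hx: "x \<in> torsion sm" and hy: "y \<in> torsion sm" for x y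
  proof -
    obtain a where a: "a \<noteq> 0" "sm a x = 0" using hx unfolding torsion_def by auto
    obtain b where b: "b \<noteq> 0" "sm b y = 0" using hy unfolding torsion_def by auto
    have "sm (b * a) (x + y) = 0"
      by (simp add: P.m1.scale_right_distrib a b flip: P.m1.scale_scale)
        (metis P.m1.scale_scale P.m1.scale_zero_right b(2) mult.commute)
    moreover have "b * a \<noteq> 0" using a b by simp
    ultimately show ?thesis unfolding torsion_def by blast
  qed
  have Tdiff: "x - y \<in> torsion sm" if "x \<in> torsion sm" "y \<in> torsion sm" for x y
    using Tadd[OF that(1) Tneg[OF that(2)]] by simp
  have qeq: "quot_T sm x = quot_T sm y \<longleftrightarrow> x - y \<in> torsion sm" for x y
  proof
    assume "quot_T sm x = quot_T sm y"
    moreover have "x \<in> quot_T sm x" unfolding quot_T_def using T0 by simp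
    ultimately show "x - y \<in> torsion sm" unfolding quot_T_def by auto
  next
    assume h: "x - y \<in> torsion sm"
    have "z - x \<in> torsion sm \<longleftrightarrow> z - y \<in> torsion sm" for z
    proof
      assume "z - x \<in> torsion sm"
      from Tadd[OF this h] show "z - y \<in> torsion sm" by simp
    next
      assume "z - y \<in> torsion sm"
      from Tdiff[OF this h] show "z - x \<in> torsion sm" by simp
    qed
    then show "quot_T sm x = quot_T sm y" unfolding quot_T_def by auto
  qed
  have tor0: "\<forall>x \<in> torsion sm. fplus x = 0"
  proof
    fix x assume "x \<in> torsion sm"
    then obtain a where a: "a \<noteq> 0" "sm a x = 0" unfolding torsion_def by auto
    have "a * fplus x = 0" using a(2) P.scale[of a x] by simp
    then show "fplus x = 0" using a(1) by simp
  qed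
  have inj1: "inj (\<lambda>a. quot_T sm (fminus a))"
  proof (rule injI)
    fix a b assume "quot_T sm (fminus a) = quot_T sm (fminus b)"
    then have "fminus (a - b) \<in> torsion sm" using qeq M.diff by simp
    then have "fplus (fminus (a - b)) = 0" using tor0 by blast
    then have "wA ^ m * (a - b) = 0" using comp2 by simp
    then show "a = b" by (metis wA_pow_nz mult_eq_0_iff right_minus_eq)
  qed
  define fbar where "fbar X = fplus (SOME x. quot_T sm x = X)" for X
  have fb: "fbar (quot_T sm x) = fplus x" for x
  proof -
    have "quot_T sm (SOME y. quot_T sm y = quot_T sm x) = quot_T sm x"
      by (rule someI) simp
    then have "(SOME y. quot_T sm y = quot_T sm x) - x \<in> torsion sm" using qeq by blast
    then have "fplus ((SOME y. quot_T sm y = quot_T sm x) - x) = 0" using tor0 by blast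
    then show ?thesis unfolding fbar_def using P.diff by simp
  qed
  have inj2: "inj_on fbar (range (quot_T sm))"
  proof (rule inj_onI)
    fix X Y assume "X \<in> range (quot_T sm)" "Y \<in> range (quot_T sm)" "fbar X = fbar Y"
    then obtain x y where xy: "X = quot_T sm x" "Y = quot_T sm y" "fplus x = fplus y"
      using fb by auto
    then have "fplus (x - y) = 0" using P.diff by simp
    then have "sm (wA ^ m) (x - y) = 0" using comp1[of "x - y"] by simp
    then have "x - y \<in> torsion sm" unfolding torsion_def using wA_pow_nz[of m] by blast
    then show "X = Y" using xy qeq by simp
  qed
  have gr: "\<forall>k. \<forall>X \<in> quot_deg sm Hd k. fbar X \<in> A_deg (k + cp)"
    unfolding quot_deg_def using fb homog_plus by auto
  have last: "\<forall>k a. a \<in> A_deg k \<longrightarrow> quot_T sm (fminus a) \<in> quot_deg sm Hd (k + cm)"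
    unfolding quot_deg_def using homog_minus by blast
  show ?thesis using inj1 tor0 fb inj2 gr last by blast
qed

end
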